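(* Let $(b,w)\in\mathbb{N}^2$. Then there exists a partition $\lambda$ such that $(b(\lambda),w(\lambda))=(b,w)$ if and only if there exist integers $k,l\in\mathbb{N}=\{0,1,2,\dots\}$ such that either \[(b,w)=\big((k+1)^2+l,\;k(k+1)+l\big)\quad\text{or}\quad (b,w)=\big(k^2+l,\;k(k+1)+l\big).\]
   Context: A partition is a finite nonincreasing sequence $\lambda=(\lambda_1,\lambda_2,\dots,\lambda_r)$ of positive integers (the empty sequence is the unique partition of $0$); set $\lambda_i=0$ for $i<1$ and $i>r$. Its Ferrers graph consists of unit squares, with row $i$ (rows indexed from $i=0$) containing $\lambda_{i+1}$ squares, left-justified, columns indexed from $0$. Colour the square in row $r$ and column $c$ black if $r+c$ is even and white if $r+c$ is odd. Then $b(\lambda)$ is the number of black squares and $w(\lambda)$ the number of white squares; explicitly $b(\lambda)=\sum_{j}\lceil \lambda_{2j+1}/2\rceil+\sum_j\lfloor \lambda_{2j}/2\rfloor$ and $w(\lambda)=\sum_{j}\lfloor \lambda_{2j+1}/2\rfloor+\sum_j\lceil \lambda_{2j}/2\rceil$. *)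

theory Defs
  imports Main
begin

definition is_partition :: "nat list \<Rightarrow> bool" where
  "is_partition lam \<longleftrightarrow> sorted_wrt (\<ge>) lam \<and> (\<forall>x\<in>set lam. 0 < x)"

definition ferrers :: "nat list \<Rightarrow> (nat \<times> nat) set" where
  "ferrers lam = {(r, c). r < length lam \<and> c < lam ! r}"

definition black :: "nat list \<Rightarrow> nat" where
  "black lam = card {(r, c) \<in> ferrers lam. even (r + c)}"

definition white :: "nat list \<Rightarrow> nat" where
  "white lam = card {(r, c) \<in> ferrers lam. odd (r + c)}"

end

theory Submission
  imports Defs
begin

lemma ferrers_Nil: "ferrers [] = {}" by (simp add: ferrers_def)

lemma card_cells_Cons:
  "card {(r, c) \<in> ferrers (x # lam). P (r + c)} =
   card {c. c < x \<and> P c} + card {(r, c) \<in> ferrers lam. P (Suc (r + c))}"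
proof -
  let ?A = "(\<lambda>c. (0::nat, c)) ` {c. c < x \<and> P c}"
  let ?B = "(\<lambda>(r, c). (Suc r, c)) ` {(r, c) \<in> ferrers lam. P (Suc (r + c))}"
  have eq: "{(r, c) \<in> ferrers (x # lam). P (r + c)} = ?A \<union> ?B"
  proof (rule set_eqI)
    fix p :: "nat \<times> nat"
    obtain r c where p: "p = (r, c)" by fastforce
    show "p \<in> {(r, c) \<in> ferrers (x # lam). P (r + c)} \<longleftrightarrow> p \<in> ?A \<union> ?B"
      unfolding p by (cases r) (auto simp: ferrers_def image_iff)
  qed
  have fA: "finite ?A" by simp
  have finF: "finite (ferrers lam)"
  proof -
    have "ferrers lam = (SIGMA r:{..<length lam}. {..<lam!r})" by (auto simp: ferrers_def)
    then show ?thesis by simp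
  qed
  have fB: "finite ?B" using finF by (auto intro: finite_subset)
  have disj: "?A \<inter> ?B = {}" by auto
  have cA: "card ?A = card {c. c < x \<and> P c}" by (rule card_image) (auto simp: inj_on_def)
  have cB: "card ?B = card {(r, c) \<in> ferrers lam. P (Suc (r + c))}"
    by (rule card_image) (auto simp: inj_on_def)
  show ?thesis unfolding eq using card_Un_disjoint[OF fA fB disj] cA cB by simp
qed

lemma card_even_below: "card {c::nat. c < x \<and> even c} = (x + 1) div 2 \<and>
                        card {c::nat. c < x \<and> odd c} = x div 2"
proof (induction x)
  case 0 then show ?case by simp
next
  case (Suc x)
  have e: "{c. c < Suc x \<and> even c} = (if even x then insert x else id) {c. c < x \<and> even c}"
    by (auto simp: less_Suc_eq)
  have o: "{c. c < Suc x \<and> odd c} = (if odd x then insert x else id) {c. c < x \<and> odd c}"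
    by (auto simp: less_Suc_eq)
  show ?case using Suc by (auto simp: e o elim!: evenE oddE)
qed

lemma black_Nil: "black [] = 0" by (simp add: black_def ferrers_Nil)
lemma white_Nil: "white [] = 0" by (simp add: white_def ferrers_Nil)

lemma black_Cons: "black (x # lam) = (x + 1) div 2 + white lam"
  unfolding black_def white_def card_cells_Cons[of x lam even] using card_even_below[of x]
  by simp

lemma white_Cons: "white (x # lam) = x div 2 + black lam"
  unfolding black_def white_def card_cells_Cons[of x lam odd] using card_even_below[of x]
  by simp

lemma invariant:
  assumes "sorted_wrt (\<ge>) lam" "\<forall>x\<in>set lam. x \<le> h"
  shows "- int (h div 2) \<le> int (black lam) - int (white lam) \<and>
         int (black lam) - int (white lam) \<le> int ((h + 1) div 2) \<and>
         (int (black lam) - int (white lam))^2 \<le> int (black lam)"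
  using assms
proof (induction lam arbitrary: h)
  case Nil then show ?case by (simp add: black_Nil white_Nil)
next
  case (Cons x mu)
  have IH: "- int (x div 2) \<le> int (black mu) - int (white mu) \<and>
         int (black mu) - int (white mu) \<le> int ((x + 1) div 2) \<and>
         (int (black mu) - int (white mu))^2 \<le> int (black mu)"
    using Cons by (intro Cons.IH) auto
  have xh: "x \<le> h" using Cons.prems by simp
  define D where "D = int (black mu) - int (white mu)"
  have hb: "- int (h div 2) \<le> - int (x div 2)" "int ((x + 1) div 2) \<le> int ((h + 1) div 2)"
    using xh by (simp_all add: div_le_mono)
  show ?case
  proof (cases "even x")
    case True
    then obtain t where t: "x = 2 * t" by (auto elim: evenE)
    have a: "(x + 1) div 2 = t" "x div 2 = t" using t by simp_all
    have D2: "D^2 \<le> int (black mu)" "- int t \<le> D" "D \<le> int t" using IH a unfolding D_def by auto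
    have E: "int (black (x # mu)) - int (white (x # mu)) = - D"
      unfolding black_Cons white_Cons a D_def by simp
    have B: "int (black (x # mu)) = int t + int (black mu) - D"
      unfolding black_Cons a D_def by simp
    have "(- D)^2 \<le> int t + int (black mu) - D" using D2 by (simp add: power2_eq_square)
    then show ?thesis unfolding E unfolding B using D2 hb a by simp
  next
    case False
    then obtain t where t: "x = 2 * t + 1" by (auto elim: oddE)
    have a: "(x + 1) div 2 = t + 1" "x div 2 = t" using t by simp_all
    have D2: "D^2 \<le> int (black mu)" "- int t \<le> D" "D \<le> int t + 1" using IH a unfolding D_def by auto
    have E: "int (black (x # mu)) - int (white (x # mu)) = 1 - D"
      unfolding black_Cons white_Cons a D_def by simp
    have B: "int (black (x # mu)) = int t + 1 + int (black mu) - D"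
      unfolding black_Cons a D_def by simp
    have "(1 - D)^2 = 1 - 2 * D + D^2" by (simp add: power2_eq_square algebra_simps)
    then have "(1 - D)^2 \<le> int t + 1 + int (black mu) - D" using D2 by linarith
    then show ?thesis unfolding E unfolding B using D2 hb a by simp
  qed
qed

fun stair :: "nat \<Rightarrow> nat list" where
  "stair 0 = []"
| "stair (Suc m) = Suc m # stair m"

lemma stair_set: "set (stair m) = {1..m}"
  by (induction m) auto

lemma stair_sorted: "sorted_wrt (\<ge>) (stair m)"
  by (induction m) (auto simp: stair_set)

lemma stair_bw: "black (stair (2 * k)) = k^2 \<and> white (stair (2 * k)) = k * (k + 1) \<and>
  black (stair (2 * k + 1)) = (k + 1)^2 \<and> white (stair (2 * k + 1)) = k * (k + 1)"
proof (induction k)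
  case 0 then show ?case by (simp add: black_Nil white_Nil black_Cons white_Cons)
next
  case (Suc k)
  have s1: "stair (2 * Suc k) = (2 * k + 2) # stair (2 * k + 1)"
    by (simp add: numeral_2_eq_2)
  have s2: "stair (2 * Suc k + 1) = (2 * k + 3) # stair (2 * Suc k)"
    by (simp add: numeral_2_eq_2 numeral_3_eq_3)
  have b1: "black (stair (2 * Suc k)) = (Suc k)^2" "white (stair (2 * Suc k)) = Suc k * (Suc k + 1)"
    unfolding s1 black_Cons white_Cons using Suc by (simp_all add: power2_eq_square algebra_simps)
  show ?case using b1 unfolding s2 black_Cons white_Cons
    by (simp add: power2_eq_square algebra_simps)
qed

lemma part_Cons_stair:
  assumes "m \<le> y" "0 < y"
  shows "is_partition (y # stair m)"
  using assms stair_sorted[of m] by (auto simp: is_partition_def stair_set)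

theorem theoremB:
  fixes b w :: nat
  shows "(\<exists>lam. is_partition lam \<and> black lam = b \<and> white lam = w) \<longleftrightarrow>
         (\<exists>k l :: nat. (b = (k + 1)^2 + l \<and> w = k * (k + 1) + l) \<or>
                       (b = k^2 + l \<and> w = k * (k + 1) + l))"
proof
  assume "\<exists>lam. is_partition lam \<and> black lam = b \<and> white lam = w"
  then obtain lam where lam: "is_partition lam" "black lam = b" "white lam = w" by blast
  have "(int b - int w)^2 \<le> int b"
    using invariant[of lam "Max (set lam \<union> {0})"] lam by (auto simp: is_partition_def)
  show "\<exists>k l :: nat. (b = (k + 1)^2 + l \<and> w = k * (k + 1) + l) \<or>
                       (b = k^2 + l \<and> w = k * (k + 1) + l)"
  proof (cases "w < b")
    case True
    define k where "k = b - w - 1"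
    have bk: "b = w + k + 1" using True k_def by simp
    have "int (k + 1) ^ 2 \<le> int w + int k + 1"
      using \<open>(int b - int w)^2 \<le> int b\<close> bk by simp
    hence "int (k * (k + 1)) \<le> int w" by (simp add: power2_eq_square algebra_simps)
    hence kw: "k * (k + 1) \<le> w" by linarith
    show ?thesis
      by (rule exI[of _ k], rule exI[of _ "w - k * (k + 1)"], rule disjI1)
         (use kw bk in \<open>simp add: power2_eq_square algebra_simps\<close>)
  next
    case False
    define k where "k = w - b"
    have wk: "w = b + k" using False k_def by simp
    have "int k ^ 2 \<le> int b"
      using \<open>(int b - int w)^2 \<le> int b\<close> wk by (simp add: power2_eq_square algebra_simps)
    hence kb: "k^2 \<le> b" by (metis of_nat_le_iff of_nat_power)
    show ?thesis
      by (rule exI[of _ k], rule exI[of _ "b - k^2"], rule disjI2)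
         (use kb wk in \<open>simp add: power2_eq_square algebra_simps\<close>)
  qed
next
  assume "\<exists>k l :: nat. (b = (k + 1)^2 + l \<and> w = k * (k + 1) + l) \<or>
                       (b = k^2 + l \<and> w = k * (k + 1) + l)"
  then obtain k l where "(b = (k + 1)^2 + l \<and> w = k * (k + 1) + l) \<or>
                       (b = k^2 + l \<and> w = k * (k + 1) + l)" by blast
  then show "\<exists>lam. is_partition lam \<and> black lam = b \<and> white lam = w"
  proof
    assume h: "b = (k + 1)^2 + l \<and> w = k * (k + 1) + l"
    show ?thesis
    proof (intro exI conjI)
      show "is_partition ((2 * k + 1 + 2 * l) # stair (2 * k))" by (rule part_Cons_stair) auto
      show "black ((2 * k + 1 + 2 * l) # stair (2 * k)) = b"
        using h stair_bw[of k] by (simp add: black_Cons power2_eq_square algebra_simps)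
      show "white ((2 * k + 1 + 2 * l) # stair (2 * k)) = w"
        using h stair_bw[of k] by (simp add: white_Cons power2_eq_square algebra_simps)
    qed
  next
    assume h: "b = k^2 + l \<and> w = k * (k + 1) + l"
    show ?thesis
    proof (cases k)
      case 0
      show ?thesis
      proof (cases "l = 0")
        case True
        then show ?thesis using h 0
          by (intro exI[of _ "[]"]) (simp add: is_partition_def black_Nil white_Nil)
      next
        case False
        then show ?thesis using h 0
          by (intro exI[of _ "[2 * l]"]) (simp add: is_partition_def black_Cons white_Cons black_Nil white_Nil)
      qed
    next
      case (Suc j)
      show ?thesis
      proof (intro exI conjI)
        show "is_partition ((2 * j + 2 + 2 * l) # stair (2 * j + 1))" by (rule part_Cons_stair) auto
        show "black ((2 * j + 2 + 2 * l) # stair (2 * j + 1)) = b"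
          using h Suc stair_bw[of j] by (simp add: black_Cons power2_eq_square algebra_simps)
        show "white ((2 * j + 2 + 2 * l) # stair (2 * j + 1)) = w"
          using h Suc stair_bw[of j] by (simp add: white_Cons power2_eq_square algebra_simps)
      qed
    qed
  qed
qed

end
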